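(* Let $H:\mathbb{R}^{2d}\to\mathbb{R}$ be continuous with $H(q,-p)=H(q,p)$ and $\int e^{-H}=1$. For $0<h<h_0$ let $\Psi_h$ be a continuous, Lebesgue-measure-preserving bijection of $\mathbb{R}^{2d}$ reversible with respect to $S(q,p)=(q,-p)$, and let $\Delta(x;h)=H(\Psi_h(x))-H(x)$. Define $\mu(h)=\int\Delta(x;h)e^{-H(x)}dx$, $s^2(h)=\int\Delta(x;h)^2e^{-H(x)}dx$, $\sigma^2(h)=s^2(h)-\mu(h)^2$. Let $\nu$ be a positive integer and assume: (i) there are functions $a(x)$ and $r(x;h)$ with $\Delta(x;h)=h^\nu a(x)+h^\nu r(x;h)$ and $\lim_{h\to0}r(x;h)=0$ for each $x$; (ii) there is a function $D\ge0$ with $\int De^{-H}<\infty$ and $\sup_{0<h<h_0}\Delta(x;h)^2/h^{2\nu}\le D(x)$ for all $x$. Then $$\lim_{h\to0}\frac{\mu(h)}{h^{2\nu}}=\frac\Sigma2,\qquad\lim_{h\to0}\frac{\sigma^2(h)}{h^{2\nu}}=\Sigma,\qquad \Sigma=\int_{\mathbb{R}^{2d}}a(x)^2e^{-H(x)}dx.$$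
   Context: In the application, $\Psi_h$ is the map advancing Hamilton's equations for $H$ over a fixed time interval $[0,\lambda]$ ($\lambda/h$ an integer) with a reversible volume-preserving integrator of order $\nu$. *)

theory Defs
  imports "HOL-Analysis.Analysis"
begin

definition flipS :: "((real^'d) \<times> (real^'d)) \<Rightarrow> ((real^'d) \<times> (real^'d))" where
  "flipS x = (fst x, - snd x)"

definition leb_measure_preserving :: "('a::euclidean_space \<Rightarrow> 'a) \<Rightarrow> bool" where
  "leb_measure_preserving f \<longleftrightarrow> f \<in> borel_measurable lborel \<and> distr lborel lborel f = lborel"

end

theory Submission
  imports Defs
begin


lemma dct_at_right:
  fixes s :: "real \<Rightarrow> 'a \<Rightarrow> real"
  assumes h0: "0 < h0" and fm: "f \<in> borel_measurable M"
    and sm: "\<And>h. 0<h \<Longrightarrow> h<h0 \<Longrightarrow> s h \<in> borel_measurable M"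
    and wi: "integrable M w"
    and lim: "\<And>x. x \<in> space M \<Longrightarrow> ((\<lambda>h. s h x) \<longlongrightarrow> f x) (at_right 0)"
    and bd: "\<And>h x. 0<h \<Longrightarrow> h<h0 \<Longrightarrow> x \<in> space M \<Longrightarrow> \<bar>s h x\<bar> \<le> w x"
  shows "((\<lambda>h. integral\<^sup>L M (s h)) \<longlongrightarrow> integral\<^sup>L M f) (at_right 0)"
proof (rule tendsto_at_right_sequentially[OF h0])
  fix S :: "nat \<Rightarrow> real" assume S: "\<And>n. 0 < S n" "\<And>n. S n < h0" "decseq S" "S \<longlonglongrightarrow> 0"
  have fl: "filterlim S (at_right 0) sequentially"
    using S by (intro tendsto_imp_filterlim_at_right) auto
  show "(\<lambda>n. integral\<^sup>L M (s (S n))) \<longlonglongrightarrow> integral\<^sup>L M f"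
  proof (rule integral_dominated_convergence[where w=w])
    show "AE x in M. (\<lambda>i. s (S i) x) \<longlonglongrightarrow> f x"
      using lim fl by (intro AE_I2) (rule filterlim_compose)
  qed (use fm sm wi bd S in auto)
qed

lemma dct_at_right_int:
  fixes s :: "real \<Rightarrow> 'a \<Rightarrow> real"
  assumes h0: "0 < h0" and fm: "f \<in> borel_measurable M"
    and sm: "\<And>h. 0<h \<Longrightarrow> h<h0 \<Longrightarrow> s h \<in> borel_measurable M"
    and wi: "integrable M w"
    and lim: "\<And>x. x \<in> space M \<Longrightarrow> ((\<lambda>h. s h x) \<longlongrightarrow> f x) (at_right 0)"
    and bd: "\<And>h x. 0<h \<Longrightarrow> h<h0 \<Longrightarrow> x \<in> space M \<Longrightarrow> \<bar>s h x\<bar> \<le> w x"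
  shows "integrable M f"
proof -
  define S where "S = (\<lambda>n::nat. h0 / 2 * inverse (real (Suc n)))"
  have S: "0 < S n" "S n < h0" for n
  proof -
    have i: "0 < inverse (real (Suc n))" "inverse (real (Suc n)) \<le> 1" by (auto simp: field_simps)
    show "0 < S n" using h0 i by (simp add: S_def)
    have "S n \<le> h0/2" using h0 i unfolding S_def by (simp add: mult_left_le)
    then show "S n < h0" using h0 by simp
  qed
  have "S \<longlonglongrightarrow> 0" unfolding S_def by (intro tendsto_mult_right_zero LIMSEQ_inverse_real_of_nat)
  then have fl: "filterlim S (at_right 0) sequentially"
    using S by (intro tendsto_imp_filterlim_at_right) auto
  show ?thesis
  proof (rule integrable_dominated_convergence[where w=w and s="\<lambda>n. s (S n)"])
    show "AE x in M. (\<lambda>i. s (S i) x) \<longlonglongrightarrow> f x"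
      using lim fl by (intro AE_I2) (rule filterlim_compose)
  qed (use fm sm wi bd S in auto)
qed

lemma uminus_mp: "distr lborel lborel (uminus :: 'a::euclidean_space \<Rightarrow> 'a) = lborel"
proof -
  have "lborel = distr lborel borel (uminus :: 'a \<Rightarrow> 'a)"
    using lborel_affine[of "-1" "0::'a"] by (simp add: density_1)
  also have "\<dots> = distr lborel lborel (uminus :: 'a \<Rightarrow> 'a)"
    by (rule distr_cong) auto
  finally show ?thesis ..
qed

lemma flipS_mp: "distr lborel lborel flipS = lborel"
proof -
  have fe: "flipS = (\<lambda>(x::real^'d, y::real^'d). (x, - y))"
    by (auto simp: flipS_def fun_eq_iff)
  have "distr lborel lborel flipS = distr (lborel \<Otimes>\<^sub>M lborel) (lborel \<Otimes>\<^sub>M lborel) (\<lambda>(x::real^'d, y::real^'d). (x, - y))"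
    by (simp add: lborel_prod fe)
  also have "\<dots> = distr lborel lborel (\<lambda>x. x) \<Otimes>\<^sub>M distr lborel lborel uminus"
    by (rule pair_measure_distr[symmetric]) (auto simp: uminus_mp lborel.sigma_finite_measure_axioms)
  also have "\<dots> = lborel"
    by (simp add: uminus_mp lborel_prod)
  finally show ?thesis .
qed

lemma flipS_meas[measurable]: "flipS \<in> borel_measurable borel"
proof (rule borel_measurable_continuous_onI)
  show "continuous_on UNIV flipS" unfolding flipS_def by (intro continuous_intros)
qed

lemma change_var:
  fixes g :: "(real^'d) \<times> (real^'d) \<Rightarrow> real"
  assumes P: "leb_measure_preserving \<Psi>" and g: "g \<in> borel_measurable borel"
  shows "integral\<^sup>L lborel g = integral\<^sup>L lborel (\<lambda>y. g (flipS (\<Psi> y)))"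
proof -
  have Pm: "\<Psi> \<in> borel_measurable borel" and Pd: "distr lborel lborel \<Psi> = lborel"
    using P by (auto simp: leb_measure_preserving_def)
  have "distr lborel lborel (flipS \<circ> \<Psi>) = lborel"
  proof -
    have "distr lborel lborel (flipS \<circ> \<Psi>) = distr (distr lborel lborel \<Psi>) lborel flipS"
      by (rule distr_distr[symmetric]) (use Pm in auto)
    then show ?thesis using Pd flipS_mp by simp
  qed
  then have "integral\<^sup>L lborel g = integral\<^sup>L (distr lborel lborel (flipS \<circ> \<Psi>)) g" by simp
  also have "\<dots> = integral\<^sup>L lborel (\<lambda>y. g ((flipS \<circ> \<Psi>) y))"
    by (rule integral_distr) (use Pm g in auto)
  finally show ?thesis by simp
qed

lemma seq_exists:
  assumes h0: "0 < (h0::real)"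
  shows "\<exists>S. (\<forall>n. 0 < S n \<and> S n < h0) \<and> filterlim S (at_right 0) sequentially"
proof -
  define S where "S = (\<lambda>n::nat. h0 / 2 * inverse (real (Suc n)))"
  have S: "0 < S n" "S n < h0" for n
  proof -
    have i: "0 < inverse (real (Suc n))" "inverse (real (Suc n)) \<le> 1" by (auto simp: field_simps)
    show "0 < S n" using h0 i by (simp add: S_def)
    have "S n \<le> h0/2" using h0 i unfolding S_def by (simp add: mult_left_le)
    then show "S n < h0" using h0 by simp
  qed
  have "S \<longlonglongrightarrow> 0" unfolding S_def by (intro tendsto_mult_right_zero LIMSEQ_inverse_real_of_nat)
  then have fl: "filterlim S (at_right 0) sequentially"
    using S by (intro tendsto_imp_filterlim_at_right) auto
  with S show ?thesis by blast
qed

lemma meas_lim_at_right: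
  fixes s :: "real \<Rightarrow> 'a \<Rightarrow> real"
  assumes h0: "0 < h0"
    and sm: "\<And>h. 0<h \<Longrightarrow> h<h0 \<Longrightarrow> s h \<in> borel_measurable M"
    and lim: "\<And>x. x \<in> space M \<Longrightarrow> ((\<lambda>h. s h x) \<longlongrightarrow> f x) (at_right 0)"
  shows "f \<in> borel_measurable M"
proof -
  obtain S where S: "\<And>n. 0 < S n \<and> S n < h0" and fl: "filterlim S (at_right 0) sequentially"
    using seq_exists[OF h0] by blast
  show ?thesis
  proof (rule borel_measurable_LIMSEQ_real[where u="\<lambda>n. s (S n)"])
    show "(\<lambda>i. s (S i) x) \<longlonglongrightarrow> f x" if "x \<in> space M" for x
      using lim[OF that] fl by (rule filterlim_compose)
  qed (use sm S in auto)
qed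

lemma exp_neg_upper: "0 \<le> (t::real) \<Longrightarrow> exp (- t) \<le> 1 - t + t\<^sup>2"
proof -
  assume t: "0 \<le> t"
  have "1 + t \<le> exp t" by (rule exp_ge_add_one_self)
  then have "exp (- t) \<le> inverse (1 + t)"
    using t by (simp add: exp_minus le_imp_inverse_le)
  also have "\<dots> \<le> 1 - t + t\<^sup>2"
  proof -
    have "1 \<le> (1 + t) * (1 - t + t\<^sup>2)" using t by (simp add: algebra_simps power2_eq_square power3_eq_cube)
    then show ?thesis using t by (simp add: field_simps)
  qed
  finally show ?thesis .
qed


theorem theorem7p1:
  fixes H :: "((real^'d) \<times> (real^'d)) \<Rightarrow> real"
    and \<Psi> :: "real \<Rightarrow> ((real^'d) \<times> (real^'d)) \<Rightarrow> ((real^'d) \<times> (real^'d))"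
    and a D :: "((real^'d) \<times> (real^'d)) \<Rightarrow> real"
    and r :: "((real^'d) \<times> (real^'d)) \<Rightarrow> real \<Rightarrow> real"
    and h0 :: real and \<nu> :: nat
  defines "\<Delta> \<equiv> (\<lambda>x h. H (\<Psi> h x) - H x)"
  defines "\<mu> \<equiv> (\<lambda>h. integral\<^sup>L lborel (\<lambda>x. \<Delta> x h * exp (- H x)))"
  defines "s2 \<equiv> (\<lambda>h. integral\<^sup>L lborel (\<lambda>x. (\<Delta> x h)\<^sup>2 * exp (- H x)))"
  defines "\<sigma>2 \<equiv> (\<lambda>h. s2 h - (\<mu> h)\<^sup>2)"
  defines "\<Sigma> \<equiv> integral\<^sup>L lborel (\<lambda>x. (a x)\<^sup>2 * exp (- H x))"
  assumes H_cont: "continuous_on UNIV H"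
    and H_sym: "\<And>q p. H (q, - p) = H (q, p)"
    and H_int: "integrable lborel (\<lambda>x. exp (- H x))"
    and H_norm: "integral\<^sup>L lborel (\<lambda>x. exp (- H x)) = 1"
    and h0_pos: "0 < h0"
    and Psi_cont: "\<And>h. 0 < h \<Longrightarrow> h < h0 \<Longrightarrow> continuous_on UNIV (\<Psi> h)"
    and Psi_bij: "\<And>h. 0 < h \<Longrightarrow> h < h0 \<Longrightarrow> bij (\<Psi> h)"
    and Psi_vol: "\<And>h. 0 < h \<Longrightarrow> h < h0 \<Longrightarrow> leb_measure_preserving (\<Psi> h)"
    and Psi_rev: "\<And>h. 0 < h \<Longrightarrow> h < h0 \<Longrightarrow> inv (\<Psi> h) = flipS \<circ> \<Psi> h \<circ> flipS"
    and nu_pos: "0 < \<nu>"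
    and expand: "\<And>x h. 0 < h \<Longrightarrow> h < h0 \<Longrightarrow> \<Delta> x h = h ^ \<nu> * a x + h ^ \<nu> * r x h"
    and r_lim: "\<And>x. ((\<lambda>h. r x h) \<longlongrightarrow> 0) (at_right 0)"
    and D_nonneg: "\<And>x. 0 \<le> D x"
    and D_int: "integrable lborel (\<lambda>x. D x * exp (- H x))"
    and D_bound: "\<And>x h. 0 < h \<Longrightarrow> h < h0 \<Longrightarrow> (\<Delta> x h)\<^sup>2 / h ^ (2 * \<nu>) \<le> D x"
  shows "((\<lambda>h. \<mu> h / h ^ (2 * \<nu>)) \<longlongrightarrow> \<Sigma> / 2) (at_right 0) \<and>
         ((\<lambda>h. \<sigma>2 h / h ^ (2 * \<nu>)) \<longlongrightarrow> \<Sigma>) (at_right 0)"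
proof -
  let ?M = "lborel :: ((real^'d) \<times> (real^'d)) measure"
  define w where "w = (\<lambda>x. exp (- H x))"
  have ev: "\<forall>\<^sub>F h in at_right 0. 0 < h \<and> h < h0"
    using h0_pos by (auto simp: eventually_at_right_field intro!: exI[of _ h0])
  have Hm[measurable]: "H \<in> borel_measurable borel"
    by (rule borel_measurable_continuous_onI[OF H_cont])
  have wm[measurable]: "w \<in> borel_measurable borel" unfolding w_def by measurable
  have w_pos: "0 < w x" for x unfolding w_def by simp
  have Psim: "\<Psi> h \<in> borel_measurable borel" if "0 < h" "h < h0" for h
    by (rule borel_measurable_continuous_onI[OF Psi_cont[OF that]])
  have Dm: "(\<lambda>x. \<Delta> x h) \<in> borel_measurable borel" if "0 < h" "h < h0" for h
    using Psim[OF that] unfolding \<Delta>_def by measurable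
  have Dwi: "integrable ?M (\<lambda>x. D x * w x)" using D_int unfolding w_def .
  have wi: "integrable ?M w" using H_int unfolding w_def .
  have Hflip: "H (flipS z) = H z" for z
    by (cases z) (simp add: flipS_def H_sym)
  have flip2: "flipS (flipS z) = z" for z by (simp add: flipS_def)
  have PSP: "\<Psi> h (flipS (\<Psi> h y)) = flipS y" if "0 < h" "h < h0" for h y
  proof -
    have "\<Psi> h (inv (\<Psi> h) z) = z" for z
      using Psi_bij[OF that] by (simp add: bij_def surj_f_inv_f)
    from this[of "flipS y"] show ?thesis using Psi_rev[OF that] by (simp add: flip2)
  qed
  have sym: "integral\<^sup>L ?M (\<lambda>x. G (\<Delta> x h) * w x) = integral\<^sup>L ?M (\<lambda>x. G (- \<Delta> x h) * exp (- \<Delta> x h) * w x)"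
    if hr: "0 < h" "h < h0" and Gm: "G \<in> borel_measurable borel" for G h
  proof -
    have gm: "(\<lambda>x. G (\<Delta> x h) * w x) \<in> borel_measurable borel"
      using Dm[OF hr] Gm wm by measurable
    have "integral\<^sup>L ?M (\<lambda>x. G (\<Delta> x h) * w x) = integral\<^sup>L ?M (\<lambda>y. G (\<Delta> (flipS (\<Psi> h y)) h) * w (flipS (\<Psi> h y)))"
      by (rule change_var[OF Psi_vol[OF hr] gm])
    also have "\<dots> = integral\<^sup>L ?M (\<lambda>x. G (- \<Delta> x h) * exp (- \<Delta> x h) * w x)"
    proof (rule Bochner_Integration.integral_cong[OF refl])
      fix y
      have 1: "\<Delta> (flipS (\<Psi> h y)) h = - \<Delta> y h" unfolding \<Delta>_def using PSP[OF hr] Hflip by simp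
      have 2: "w (flipS (\<Psi> h y)) = exp (- \<Delta> y h) * w y"
        unfolding w_def \<Delta>_def Hflip by (simp add: exp_add[symmetric])
      show "G (\<Delta> (flipS (\<Psi> h y)) h) * w (flipS (\<Psi> h y)) = G (- \<Delta> y h) * exp (- \<Delta> y h) * w y"
        by (simp add: 1 2)
    qed
    finally show ?thesis .
  qed
  define E where "E = (\<lambda>h x. \<Delta> x h / h ^ \<nu>)"
  have Eeq: "E h x = a x + r x h" if "0 < h" "h < h0" for h x
    using expand[OF that, of x] that by (simp add: E_def field_simps)
  have Dl: "\<Delta> x h = h ^ \<nu> * E h x" if "0 < h" for h x
    using that by (simp add: E_def)
  have Esq: "(\<Delta> x h)\<^sup>2 / h ^ (2 * \<nu>) = (E h x)\<^sup>2" if "0 < h" for h x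
    using that by (simp add: E_def power_divide power_mult[symmetric] mult.commute)
  have Ebd: "(E h x)\<^sup>2 \<le> D x" if "0 < h" "h < h0" for h x
    using D_bound[OF that, of x] Esq[OF that(1)] by simp
  have Elim: "((\<lambda>h. E h x) \<longlongrightarrow> a x) (at_right 0)" for x
  proof -
    have "((\<lambda>h. a x + r x h) \<longlongrightarrow> a x + 0) (at_right 0)"
      by (intro tendsto_add tendsto_const r_lim)
    then have "((\<lambda>h. a x + r x h) \<longlongrightarrow> a x) (at_right 0)" by simp
    then show ?thesis
      by (rule Lim_transform_eventually) (use ev in \<open>eventually_elim, simp add: Eeq\<close>)
  qed
  have Dlim: "((\<lambda>h. \<Delta> x h) \<longlongrightarrow> 0) (at_right 0)" for x
  proof -
    have "((\<lambda>h. h ^ \<nu> * E h x) \<longlongrightarrow> 0 ^ \<nu> * a x) (at_right 0)"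
      by (intro tendsto_intros Elim)
    then have "((\<lambda>h. h ^ \<nu> * E h x) \<longlongrightarrow> 0) (at_right 0)" using nu_pos by (simp add: zero_power)
    then show ?thesis
      by (rule Lim_transform_eventually) (use ev in \<open>eventually_elim, simp add: Dl\<close>)
  qed
  have Em: "E h \<in> borel_measurable borel" if "0 < h" "h < h0" for h
    using Dm[OF that] unfolding E_def by measurable
  have am[measurable]: "a \<in> borel_measurable borel"
    by (rule meas_lim_at_right[OF h0_pos, of E]) (use Em Elim in auto)
  have intb: "integrable ?M g" if "g \<in> borel_measurable borel" "\<And>x. \<bar>g x\<bar> \<le> w x + c * (D x * w x)" for g c
  proof (rule Bochner_Integration.integrable_bound[where f="\<lambda>x. w x + c * (D x * w x)"])
    show "integrable ?M (\<lambda>x. w x + c * (D x * w x))"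
      using wi Dwi by (intro Bochner_Integration.integrable_add integrable_mult_right)
    show "AE x in ?M. norm (g x) \<le> norm (w x + c * (D x * w x))"
      using that(2) by (intro AE_I2) (simp, meson abs_ge_self order_trans)
  qed (use that in simp)
  have Dsq: "(\<Delta> x h)\<^sup>2 \<le> h ^ (2 * \<nu>) * D x" if "0 < h" "h < h0" for h x
    using D_bound[OF that, of x] that by (simp add: pos_divide_le_eq mult.commute)
  have Dabs: "\<bar>\<Delta> x h\<bar> \<le> 1 + h ^ (2 * \<nu>) * D x" if "0 < h" "h < h0" for h x
  proof -
    have "\<bar>\<Delta> x h\<bar> \<le> 1 + (\<Delta> x h)\<^sup>2"
    proof (cases "\<bar>\<Delta> x h\<bar> \<le> 1")
      case True then show ?thesis by (smt (verit) zero_le_power2)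
    next
      case False
      then have "\<bar>\<Delta> x h\<bar> * 1 \<le> \<bar>\<Delta> x h\<bar> * \<bar>\<Delta> x h\<bar>" by (intro mult_left_mono) auto
      then show ?thesis by (simp add: power2_eq_square)
    qed
    then show ?thesis using Dsq[OF that, of x] by simp
  qed
  have Sig: "\<Sigma> = integral\<^sup>L ?M (\<lambda>x. (a x)\<^sup>2 * w x)" by (simp add: \<Sigma>_def w_def)
  have s2eq: "s2 h / h ^ (2 * \<nu>) = integral\<^sup>L ?M (\<lambda>x. (E h x)\<^sup>2 * w x)" if "0 < h" "h < h0" for h
  proof -
    have "s2 h / h ^ (2 * \<nu>) = integral\<^sup>L ?M (\<lambda>x. (\<Delta> x h)\<^sup>2 * w x / h ^ (2 * \<nu>))"
      by (simp add: s2_def w_def)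
    also have "\<dots> = integral\<^sup>L ?M (\<lambda>x. (E h x)\<^sup>2 * w x)"
    proof (intro Bochner_Integration.integral_cong refl)
      fix x
      show "(\<Delta> x h)\<^sup>2 * w x / h ^ (2 * \<nu>) = (E h x)\<^sup>2 * w x"
        by (subst Esq[OF that(1), of x, symmetric]) (simp only: times_divide_eq_left)
    qed
    finally show ?thesis .
  qed
  have L1: "((\<lambda>h. s2 h / h ^ (2 * \<nu>)) \<longlongrightarrow> \<Sigma>) (at_right 0)"
  proof -
    have "((\<lambda>h. integral\<^sup>L ?M (\<lambda>x. (E h x)\<^sup>2 * w x)) \<longlongrightarrow> integral\<^sup>L ?M (\<lambda>x. (a x)\<^sup>2 * w x)) (at_right 0)"
    proof (rule dct_at_right[OF h0_pos _ _ Dwi])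
      show "(\<lambda>x. (a x)\<^sup>2 * w x) \<in> borel_measurable ?M" by simp
      show "(\<lambda>x. (E h x)\<^sup>2 * w x) \<in> borel_measurable ?M" if "0 < h" "h < h0" for h
        using Em[OF that] by simp
      show "((\<lambda>h. (E h x)\<^sup>2 * w x) \<longlongrightarrow> (a x)\<^sup>2 * w x) (at_right 0)" for x
        by (intro tendsto_intros Elim)
      show "\<bar>(E h x)\<^sup>2 * w x\<bar> \<le> D x * w x" if "0 < h" "h < h0" for h x
        using Ebd[OF that, of x] w_pos[of x] by (simp add: abs_mult mult_right_mono)
    qed
    then show ?thesis unfolding Sig
      by (rule Lim_transform_eventually) (use ev in \<open>eventually_elim, simp add: s2eq\<close>)
  qed
  define P where "P = (\<lambda>h x. if 0 < E h x then (E h x)\<^sup>2 else 0)"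
  define Ap where "Ap = (\<lambda>x. if 0 < a x then (a x)\<^sup>2 else 0)"
  have Apm[measurable]: "Ap \<in> borel_measurable borel" unfolding Ap_def by measurable
  have Pm: "P h \<in> borel_measurable borel" if "0 < h" "h < h0" for h
    using Em[OF that] unfolding P_def by measurable
  have Ppos: "0 \<le> P h x" for h x by (simp add: P_def)
  have Ple: "P h x \<le> (E h x)\<^sup>2" for h x by (simp add: P_def)
  have Ppos_iff: "(0 < E h x) = (0 < \<Delta> x h)" if "0 < h" for h x
    using that by (simp add: E_def zero_less_divide_iff)
  have Plim: "((\<lambda>h. P h x) \<longlongrightarrow> Ap x) (at_right 0)" for x
  proof (cases "0 < a x")
    case True
    have "\<forall>\<^sub>F h in at_right 0. 0 < E h x" using order_tendstoD(1)[OF Elim True] .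
    then have "\<forall>\<^sub>F h in at_right 0. (E h x)\<^sup>2 = P h x" by eventually_elim (simp add: P_def)
    moreover have "((\<lambda>h. (E h x)\<^sup>2) \<longlongrightarrow> (a x)\<^sup>2) (at_right 0)" by (intro tendsto_intros Elim)
    ultimately have "((\<lambda>h. P h x) \<longlongrightarrow> (a x)\<^sup>2) (at_right 0)" by (blast intro: Lim_transform_eventually)
    then show ?thesis using True by (simp add: Ap_def)
  next
    case False
    show ?thesis
    proof (cases "a x < 0")
      case True
      have "\<forall>\<^sub>F h in at_right 0. E h x < 0" using order_tendstoD(2)[OF Elim True] .
      then have "\<forall>\<^sub>F h in at_right 0. 0 = P h x" by eventually_elim (simp add: P_def)
      then have "((\<lambda>h. P h x) \<longlongrightarrow> 0) (at_right 0)" by (rule Lim_transform_eventually[OF tendsto_const])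
      then show ?thesis using True by (simp add: Ap_def)
    next
      case False2: False
      with False have a0: "a x = 0" by simp
      have "((\<lambda>h. (E h x)\<^sup>2) \<longlongrightarrow> (a x)\<^sup>2) (at_right 0)" by (intro tendsto_intros Elim)
      then have "((\<lambda>h. (E h x)\<^sup>2) \<longlongrightarrow> 0) (at_right 0)" using a0 by simp
      then have "((\<lambda>h. P h x) \<longlongrightarrow> 0) (at_right 0)"
        by (rule tendsto_sandwich[rotated 2, OF tendsto_const]) (auto simp: Ppos Ple)
      then show ?thesis using a0 by (simp add: Ap_def)
    qed
  qed
  have s2dec: "s2 h / h ^ (2 * \<nu>) = integral\<^sup>L ?M (\<lambda>x. (P h x + P h x * exp (- \<Delta> x h)) * w x)"
    if hr: "0 < h" "h < h0" for h
  proof -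
    define Q where "Q = (\<lambda>x. if 0 < \<Delta> x h then (\<Delta> x h)\<^sup>2 else 0)"
    define G where "G = (\<lambda>t::real. if t < 0 then t\<^sup>2 else 0)"
    have Gm: "G \<in> borel_measurable borel" unfolding G_def by measurable
    have Qm: "Q \<in> borel_measurable borel" using Dm[OF hr] unfolding Q_def by measurable
    have QP: "Q x / h ^ (2 * \<nu>) = P h x" for x
      using Esq[OF hr(1), of x] Ppos_iff[OF hr(1), of x] by (simp add: Q_def P_def)
    have Qb: "\<bar>Q x\<bar> \<le> h ^ (2 * \<nu>) * D x" for x
      using Dsq[OF hr, of x] D_nonneg[of x] hr by (auto simp: Q_def)
    have eb: "Q x * exp (- \<Delta> x h) \<le> Q x" for x
      by (auto simp: Q_def intro!: mult_left_le)
    have i1: "integrable ?M (\<lambda>x. Q x * w x)"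
    proof (rule intb[of _ "h ^ (2 * \<nu>)"])
      show "(\<lambda>x. Q x * w x) \<in> borel_measurable borel" using Qm by measurable
      show "\<bar>Q x * w x\<bar> \<le> w x + h ^ (2 * \<nu>) * (D x * w x)" for x
        using Qb[of x] w_pos[of x] by (simp add: abs_mult) (smt (verit) mult.assoc mult_right_mono)
    qed
    have i2: "integrable ?M (\<lambda>x. Q x * exp (- \<Delta> x h) * w x)"
    proof (rule intb[of _ "h ^ (2 * \<nu>)"])
      show "(\<lambda>x. Q x * exp (- \<Delta> x h) * w x) \<in> borel_measurable borel"
        using Qm Dm[OF hr] by measurable
      show "\<bar>Q x * exp (- \<Delta> x h) * w x\<bar> \<le> w x + h ^ (2 * \<nu>) * (D x * w x)" for x
      proof -
        have "0 \<le> Q x" by (simp add: Q_def)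
        then have "\<bar>Q x * exp (- \<Delta> x h)\<bar> \<le> h ^ (2 * \<nu>) * D x"
          using eb[of x] Qb[of x] by simp
        then show ?thesis using w_pos[of x] by (simp add: abs_mult) (smt (verit) mult.assoc mult_right_mono)
      qed
    qed
    have i3: "integrable ?M (\<lambda>x. G (\<Delta> x h) * w x)"
    proof (rule intb[of _ "h ^ (2 * \<nu>)"])
      show "(\<lambda>x. G (\<Delta> x h) * w x) \<in> borel_measurable borel" using Gm Dm[OF hr] by measurable
      show "\<bar>G (\<Delta> x h) * w x\<bar> \<le> w x + h ^ (2 * \<nu>) * (D x * w x)" for x
      proof -
        have "\<bar>G (\<Delta> x h)\<bar> \<le> h ^ (2 * \<nu>) * D x"
          using Dsq[OF hr, of x] D_nonneg[of x] hr by (auto simp: G_def)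
        then show ?thesis using w_pos[of x] by (simp add: abs_mult) (smt (verit) mult.assoc mult_right_mono)
      qed
    qed
    have "s2 h = integral\<^sup>L ?M (\<lambda>x. Q x * w x + G (\<Delta> x h) * w x)"
      unfolding s2_def w_def[symmetric]
      by (intro Bochner_Integration.integral_cong) (auto simp: Q_def G_def w_def algebra_simps)
    also have "\<dots> = integral\<^sup>L ?M (\<lambda>x. Q x * w x) + integral\<^sup>L ?M (\<lambda>x. G (\<Delta> x h) * w x)"
      by (rule Bochner_Integration.integral_add[OF i1 i3])
    also have "integral\<^sup>L ?M (\<lambda>x. G (\<Delta> x h) * w x) = integral\<^sup>L ?M (\<lambda>x. G (- \<Delta> x h) * exp (- \<Delta> x h) * w x)"
      by (rule sym[OF hr Gm])
    also have "\<dots> = integral\<^sup>L ?M (\<lambda>x. Q x * exp (- \<Delta> x h) * w x)"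
      by (intro Bochner_Integration.integral_cong) (auto simp: Q_def G_def)
    also have "integral\<^sup>L ?M (\<lambda>x. Q x * w x) + \<dots> = integral\<^sup>L ?M (\<lambda>x. Q x * w x + Q x * exp (- \<Delta> x h) * w x)"
      by (rule Bochner_Integration.integral_add[OF i1 i2, symmetric])
    finally have "s2 h / h ^ (2 * \<nu>) = integral\<^sup>L ?M (\<lambda>x. (Q x * w x + Q x * exp (- \<Delta> x h) * w x) / h ^ (2 * \<nu>))"
      by simp
    also have "\<dots> = integral\<^sup>L ?M (\<lambda>x. (P h x + P h x * exp (- \<Delta> x h)) * w x)"
      using hr by (intro Bochner_Integration.integral_cong) (auto simp: QP[symmetric] field_simps)
    finally show ?thesis .
  qed
  have L2: "((\<lambda>h. s2 h / h ^ (2 * \<nu>)) \<longlongrightarrow> 2 * integral\<^sup>L ?M (\<lambda>x. Ap x * w x)) (at_right 0)"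
  proof -
    have "((\<lambda>h. integral\<^sup>L ?M (\<lambda>x. (P h x + P h x * exp (- \<Delta> x h)) * w x)) \<longlongrightarrow>
           integral\<^sup>L ?M (\<lambda>x. (Ap x + Ap x * exp (- 0)) * w x)) (at_right 0)"
    proof (rule dct_at_right[OF h0_pos _ _ integrable_mult_right[OF Dwi, of 2]])
      show "(\<lambda>x. (Ap x + Ap x * exp (- 0)) * w x) \<in> borel_measurable ?M" by simp
      show "(\<lambda>x. (P h x + P h x * exp (- \<Delta> x h)) * w x) \<in> borel_measurable ?M" if "0 < h" "h < h0" for h
        using Pm[OF that] Dm[OF that] by simp
      show "((\<lambda>h. (P h x + P h x * exp (- \<Delta> x h)) * w x) \<longlongrightarrow> (Ap x + Ap x * exp (- 0)) * w x) (at_right 0)" for x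
        by (intro tendsto_intros Plim Dlim)
      show "\<bar>(P h x + P h x * exp (- \<Delta> x h)) * w x\<bar> \<le> 2 * (D x * w x)" if hr: "0 < h" "h < h0" for h x
      proof -
        have "P h x * exp (- \<Delta> x h) \<le> P h x"
          using Ppos_iff[OF hr(1), of x] by (auto simp: P_def intro!: mult_left_le)
        moreover have "P h x \<le> D x" using Ple[of h x] Ebd[OF hr, of x] by simp
        moreover have "0 \<le> P h x * exp (- \<Delta> x h)" using Ppos[of h x] by simp
        ultimately have "\<bar>P h x + P h x * exp (- \<Delta> x h)\<bar> \<le> 2 * D x" using Ppos[of h x] by simp
        then show ?thesis using w_pos[of x] by (simp add: abs_mult)
      qed
    qed
    moreover have "integral\<^sup>L ?M (\<lambda>x. (Ap x + Ap x * exp (- 0)) * w x) = 2 * integral\<^sup>L ?M (\<lambda>x. Ap x * w x)"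
      by (subst integral_mult_right_zero[symmetric]) (simp add: algebra_simps)
    ultimately have "((\<lambda>h. integral\<^sup>L ?M (\<lambda>x. (P h x + P h x * exp (- \<Delta> x h)) * w x)) \<longlongrightarrow>
           2 * integral\<^sup>L ?M (\<lambda>x. Ap x * w x)) (at_right 0)" by simp
    then show ?thesis
      by (rule Lim_transform_eventually) (use ev in \<open>eventually_elim, simp add: s2dec\<close>)
  qed
  define F where "F = (\<lambda>h x. (if 0 < \<Delta> x h then \<Delta> x h * (1 - exp (- \<Delta> x h)) else 0) / h ^ (2 * \<nu>))"
  have Fsand: "P h x - P h x * \<Delta> x h \<le> F h x \<and> F h x \<le> P h x" if hr: "0 < h" for h x
  proof (cases "0 < \<Delta> x h")
    case True
    let ?d = "\<Delta> x h"
    have hp: "0 < h ^ (2 * \<nu>)" using hr by simp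
    have PE: "P h x = ?d\<^sup>2 / h ^ (2 * \<nu>)"
      using Esq[OF hr, of x] Ppos_iff[OF hr, of x] True by (simp add: P_def)
    have u: "1 - ?d \<le> exp (- ?d)" using exp_ge_add_one_self[of "- ?d"] by simp
    have l: "exp (- ?d) \<le> 1 - ?d + ?d\<^sup>2" using exp_neg_upper[of ?d] True by simp
    have "?d * (1 - exp (- ?d)) \<le> ?d\<^sup>2"
      using mult_left_mono[of "1 - exp (- ?d)" ?d ?d] u True by (simp add: power2_eq_square)
    moreover have "?d\<^sup>2 - ?d\<^sup>2 * ?d \<le> ?d * (1 - exp (- ?d))"
      using mult_left_mono[of "?d - ?d\<^sup>2" "1 - exp (- ?d)" ?d] l True
      by (simp add: power2_eq_square algebra_simps)
    ultimately have A: "?d * (1 - exp (- ?d)) \<le> ?d\<^sup>2" and B: "?d\<^sup>2 - ?d\<^sup>2 * ?d \<le> ?d * (1 - exp (- ?d))" .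
    have FE: "F h x = ?d * (1 - exp (- ?d)) / h ^ (2 * \<nu>)" using True by (simp add: F_def)
    have "F h x \<le> P h x" unfolding FE PE by (rule divide_right_mono[OF A]) (use hp in simp)
    moreover have "P h x - P h x * ?d = (?d\<^sup>2 - ?d\<^sup>2 * ?d) / h ^ (2 * \<nu>)"
      unfolding PE by (simp add: diff_divide_distrib times_divide_eq_left)
    moreover have "(?d\<^sup>2 - ?d\<^sup>2 * ?d) / h ^ (2 * \<nu>) \<le> F h x"
      unfolding FE by (rule divide_right_mono[OF B]) (use hp in simp)
    ultimately show ?thesis by simp
  next
    case False
    then have "P h x = 0" using Ppos_iff[OF hr, of x] by (simp add: P_def)
    then show ?thesis using False by (simp add: F_def)
  qed
  have Flim: "((\<lambda>h. F h x) \<longlongrightarrow> Ap x) (at_right 0)" for x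
  proof (rule tendsto_sandwich[where f="\<lambda>h. P h x - P h x * \<Delta> x h" and h="\<lambda>h. P h x"])
    show "\<forall>\<^sub>F h in at_right 0. P h x - P h x * \<Delta> x h \<le> F h x"
      using ev by eventually_elim (use Fsand in blast)
    show "\<forall>\<^sub>F h in at_right 0. F h x \<le> P h x"
      using ev by eventually_elim (use Fsand in blast)
    have "((\<lambda>h. P h x - P h x * \<Delta> x h) \<longlongrightarrow> Ap x - Ap x * 0) (at_right 0)"
      by (intro tendsto_intros Plim Dlim)
    then show "((\<lambda>h. P h x - P h x * \<Delta> x h) \<longlongrightarrow> Ap x) (at_right 0)" by simp
  qed (rule Plim)
  have Fpos: "0 \<le> F h x" if "0 < h" for h x
    using that by (auto simp: F_def intro!: divide_nonneg_pos mult_nonneg_nonneg)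
  have mueq: "\<mu> h / h ^ (2 * \<nu>) = integral\<^sup>L ?M (\<lambda>x. F h x * w x)" if hr: "0 < h" "h < h0" for h
  proof -
    define Q where "Q = (\<lambda>x. if 0 < \<Delta> x h then \<Delta> x h else 0)"
    define G where "G = (\<lambda>t::real. if t < 0 then t else 0)"
    have Gm: "G \<in> borel_measurable borel" unfolding G_def by measurable
    have Qm: "Q \<in> borel_measurable borel" using Dm[OF hr] unfolding Q_def by measurable
    have Qb: "\<bar>Q x\<bar> \<le> 1 + h ^ (2 * \<nu>) * D x" for x
      using Dabs[OF hr, of x] D_nonneg[of x] hr by (auto simp: Q_def)
    have bnd: "\<bar>f x * w x\<bar> \<le> w x + h ^ (2 * \<nu>) * (D x * w x)"
      if "\<bar>f x\<bar> \<le> 1 + h ^ (2 * \<nu>) * D x" for f x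
    proof -
      have "\<bar>f x\<bar> * w x \<le> (1 + h ^ (2 * \<nu>) * D x) * w x"
        by (rule mult_right_mono[OF that]) (use w_pos[of x] in simp)
      then show ?thesis using w_pos[of x] by (simp add: abs_mult distrib_right mult.assoc)
    qed
    have i1: "integrable ?M (\<lambda>x. Q x * w x)"
    proof (rule intb[of _ "h ^ (2 * \<nu>)"])
      show "(\<lambda>x. Q x * w x) \<in> borel_measurable borel" using Qm by measurable
      show "\<bar>Q x * w x\<bar> \<le> w x + h ^ (2 * \<nu>) * (D x * w x)" for x by (rule bnd[OF Qb])
    qed
    have i2: "integrable ?M (\<lambda>x. - Q x * exp (- \<Delta> x h) * w x)"
    proof (rule intb[of _ "h ^ (2 * \<nu>)"])
      show "(\<lambda>x. - Q x * exp (- \<Delta> x h) * w x) \<in> borel_measurable borel"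
        using Qm Dm[OF hr] by measurable
      show "\<bar>- Q x * exp (- \<Delta> x h) * w x\<bar> \<le> w x + h ^ (2 * \<nu>) * (D x * w x)" for x
      proof -
        have "\<bar>- Q x * exp (- \<Delta> x h)\<bar> \<le> \<bar>Q x\<bar>"
          by (auto simp: Q_def abs_mult intro!: mult_left_le)
        then show ?thesis using bnd[of "\<lambda>x. - Q x * exp (- \<Delta> x h)" x] Qb[of x] by simp
      qed
    qed
    have i3: "integrable ?M (\<lambda>x. G (\<Delta> x h) * w x)"
    proof (rule intb[of _ "h ^ (2 * \<nu>)"])
      show "(\<lambda>x. G (\<Delta> x h) * w x) \<in> borel_measurable borel" using Gm Dm[OF hr] by measurable
      show "\<bar>G (\<Delta> x h) * w x\<bar> \<le> w x + h ^ (2 * \<nu>) * (D x * w x)" for x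
        using bnd[of "\<lambda>x. G (\<Delta> x h)" x] Dabs[OF hr, of x] D_nonneg[of x] hr by (auto simp: G_def)
    qed
    have "\<mu> h = integral\<^sup>L ?M (\<lambda>x. Q x * w x + G (\<Delta> x h) * w x)"
      unfolding \<mu>_def w_def[symmetric]
      by (intro Bochner_Integration.integral_cong) (auto simp: Q_def G_def w_def algebra_simps)
    also have "\<dots> = integral\<^sup>L ?M (\<lambda>x. Q x * w x) + integral\<^sup>L ?M (\<lambda>x. G (\<Delta> x h) * w x)"
      by (rule Bochner_Integration.integral_add[OF i1 i3])
    also have "integral\<^sup>L ?M (\<lambda>x. G (\<Delta> x h) * w x) = integral\<^sup>L ?M (\<lambda>x. G (- \<Delta> x h) * exp (- \<Delta> x h) * w x)"
      by (rule sym[OF hr Gm])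
    also have "\<dots> = integral\<^sup>L ?M (\<lambda>x. - Q x * exp (- \<Delta> x h) * w x)"
      by (intro Bochner_Integration.integral_cong) (auto simp: Q_def G_def)
    also have "integral\<^sup>L ?M (\<lambda>x. Q x * w x) + \<dots> = integral\<^sup>L ?M (\<lambda>x. Q x * w x + - Q x * exp (- \<Delta> x h) * w x)"
      by (rule Bochner_Integration.integral_add[OF i1 i2, symmetric])
    finally have "\<mu> h / h ^ (2 * \<nu>) = integral\<^sup>L ?M (\<lambda>x. (Q x * w x + - Q x * exp (- \<Delta> x h) * w x) / h ^ (2 * \<nu>))"
      by simp
    also have "\<dots> = integral\<^sup>L ?M (\<lambda>x. F h x * w x)"
    proof (intro Bochner_Integration.integral_cong refl)
      fix x
      show "(Q x * w x + - Q x * exp (- \<Delta> x h) * w x) / h ^ (2 * \<nu>) = F h x * w x"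
        by (cases "0 < \<Delta> x h") (simp_all add: F_def Q_def algebra_simps times_divide_eq_left)
    qed
    finally show ?thesis .
  qed
  have L3: "((\<lambda>h. \<mu> h / h ^ (2 * \<nu>)) \<longlongrightarrow> integral\<^sup>L ?M (\<lambda>x. Ap x * w x)) (at_right 0)"
  proof -
    have "((\<lambda>h. integral\<^sup>L ?M (\<lambda>x. F h x * w x)) \<longlongrightarrow> integral\<^sup>L ?M (\<lambda>x. Ap x * w x)) (at_right 0)"
    proof (rule dct_at_right[OF h0_pos _ _ Dwi])
      show "(\<lambda>x. Ap x * w x) \<in> borel_measurable ?M" by simp
      show "(\<lambda>x. F h x * w x) \<in> borel_measurable ?M" if "0 < h" "h < h0" for h
        using Dm[OF that] unfolding F_def by measurable
      show "((\<lambda>h. F h x * w x) \<longlongrightarrow> Ap x * w x) (at_right 0)" for x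
        by (intro tendsto_intros Flim)
      show "\<bar>F h x * w x\<bar> \<le> D x * w x" if hr: "0 < h" "h < h0" for h x
      proof -
        have "\<bar>F h x\<bar> \<le> D x" using Fpos[OF hr(1), of x] Fsand[OF hr(1), of x] Ple[of h x] Ebd[OF hr, of x] by simp
        then show ?thesis using w_pos[of x] by (simp add: abs_mult mult_right_mono)
      qed
    qed
    then show ?thesis
      by (rule Lim_transform_eventually) (use ev in \<open>eventually_elim, simp add: mueq\<close>)
  qed
  have ApS: "integral\<^sup>L ?M (\<lambda>x. Ap x * w x) = \<Sigma> / 2"
    using tendsto_unique[OF _ L1 L2] by simp
  have L4: "((\<lambda>h. \<sigma>2 h / h ^ (2 * \<nu>)) \<longlongrightarrow> \<Sigma>) (at_right 0)"
  proof -
    have "((\<lambda>h. s2 h / h ^ (2 * \<nu>) - (\<mu> h / h ^ (2 * \<nu>))\<^sup>2 * h ^ (2 * \<nu>)) \<longlongrightarrow> \<Sigma> - (\<Sigma> / 2)\<^sup>2 * 0 ^ (2 * \<nu>)) (at_right 0)"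
    proof -
      have T1: "((\<lambda>h::real. h ^ (2 * \<nu>)) \<longlongrightarrow> 0 ^ (2 * \<nu>)) (at_right 0)"
        by (intro tendsto_intros)
      have L3': "((\<lambda>h. \<mu> h / h ^ (2 * \<nu>)) \<longlongrightarrow> \<Sigma> / 2) (at_right 0)" using L3 unfolding ApS .
      show ?thesis by (rule tendsto_diff[OF L1 tendsto_mult[OF tendsto_power[OF L3'] T1]])
    qed
    then have "((\<lambda>h. s2 h / h ^ (2 * \<nu>) - (\<mu> h / h ^ (2 * \<nu>))\<^sup>2 * h ^ (2 * \<nu>)) \<longlongrightarrow> \<Sigma>) (at_right 0)"
      using nu_pos by (simp add: zero_power)
    then show ?thesis
    proof (rule Lim_transform_eventually)
      show "\<forall>\<^sub>F h in at_right 0. s2 h / h ^ (2 * \<nu>) - (\<mu> h / h ^ (2 * \<nu>))\<^sup>2 * h ^ (2 * \<nu>) = \<sigma>2 h / h ^ (2 * \<nu>)"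
        using ev by eventually_elim (simp add: \<sigma>2_def power2_eq_square field_simps)
    qed
  qed
  show ?thesis using L3 L4 unfolding ApS by simp
qed

end
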